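(* Let $m\ge 1$ and let $\mathbf A,\mathbf B\in\mathbb R^{m\times m}$, where $\mathbf A$ is Schur stable (spectral radius $\rho(\mathbf A)<1$). Fix a symmetric positive definite matrix $\mathbf C\in\mathbb R^{m\times m}$ and let $\mathbf H=\mathbf H^T$ be the unique positive definite solution of the discrete Lyapunov equation $\mathbf A^T\mathbf H\mathbf A-\mathbf H=-\mathbf C$. Let $c>0$ be the smallest eigenvalue of $\mathbf C$, and let $0<\underline{\eta}\le\overline{\eta}$ be the smallest and largest eigenvalues of $\mathbf H$. Define $$\alpha:=\begin{cases}\dfrac{\big|\,\overline{\eta}-c+|\mathbf A^T\mathbf H\mathbf B|\,\big|}{\overline{\eta}}, & \text{if } c>|\mathbf A^T\mathbf H\mathbf B|,\\[2mm] \dfrac{\big|\,\underline{\eta}-c+|\mathbf A^T\mathbf H\mathbf B|\,\big|}{\underline{\eta}}, & \text{if } c\le|\mathbf A^T\mathbf H\mathbf B|,\end{cases}\qquad \beta:=\underline{\eta}^{-1}\big(|\mathbf A^T\mathbf H\mathbf B|+|\mathbf B^T\mathbf H\mathbf B|\big).$$ Let $\mathcal T\subset\{1,2,3,\dots\}$ be a nonempty set with $\overline{\tau}:=\max_{\tau\in\mathcal T}\tau<\infty$, and let $\tau:\mathbb Z_{\ge 0}\to\mathcal T$, $t\mapsto\tau_t$, be an arbitrary (deterministic) delay sequence. Consider any sequence $(\mathbf x_t)_{t\ge 0}\subset\mathbb R^m$ with arbitrary initial values $\mathbf x_0,\dots,\mathbf x_{\overline{\tau}}$ satisfying $$\mathbf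 x_{t+1}=\mathbf A\,\mathbf x_t+\mathbf B\,\mathbf x_{t-\tau_t}\qquad\text{for all } t\ge\overline{\tau}.$$ If $\alpha+\beta<1$, then $\mathbf x_t\to 0$ exponentially fast as $t\to\infty$, i.e. there exist constants $M>0$ and $\lambda\in(0,1)$ (independent of $t$) such that $\|\mathbf x_t\|\le M\lambda^{t}\max_{0\le s\le\overline{\tau}}\|\mathbf x_s\|$ for all $t\ge 0$.
   Context: Here $|\cdot|$ applied to a matrix denotes the induced (operator) Euclidean norm, and $|\cdot|$ applied to a real number denotes absolute value. In the paper this is applied to the closed-loop mean dynamics of a linear plant with Kalman filter, LQG feedback and an additional delayed state-feedback "watermarking" term, where $\mathbf A$ is the LQG closed-loop matrix and $\mathbf B$ the matrix multiplying the delayed state, but the statement is purely about the delayed linear recursion above. *)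

theory Defs
  imports "HOL-Analysis.Analysis"
begin

definition cmat :: "real^'n^'n \<Rightarrow> complex^'n^'n" where
  "cmat A = (\<chi> i j. complex_of_real (A $ i $ j))"

definition cspectrum :: "real^'n^'n \<Rightarrow> complex set" where
  "cspectrum A = {\<mu>. \<exists>v::complex^'n. v \<noteq> 0 \<and> cmat A *v v = \<mu> *s v}"

definition spectral_radius :: "real^'n^'n \<Rightarrow> real" where
  "spectral_radius A = Max (cmod ` cspectrum A)"

definition schur_stable :: "real^'n^'n \<Rightarrow> bool" where
  "schur_stable A \<longleftrightarrow> spectral_radius A < 1"

definition real_eigenvalues :: "real^'n^'n \<Rightarrow> real set" where
  "real_eigenvalues A = {\<mu>. \<exists>v::real^'n. v \<noteq> 0 \<and> A *v v = \<mu> *s v}"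

definition min_eig :: "real^'n^'n \<Rightarrow> real" where
  "min_eig A = Min (real_eigenvalues A)"

definition max_eig :: "real^'n^'n \<Rightarrow> real" where
  "max_eig A = Max (real_eigenvalues A)"

definition pos_def :: "real^'n^'n \<Rightarrow> bool" where
  "pos_def A \<longleftrightarrow> (\<forall>x. x \<noteq> 0 \<longrightarrow> x \<bullet> (A *v x) > 0)"

definition mnorm :: "real^'n^'n \<Rightarrow> real" where
  "mnorm A = onorm (\<lambda>x. A *v x)"

end

theory Submission
  imports Defs
begin

lemma inner_mv_transpose: "(P *v y) \<bullet> w = y \<bullet> (transpose P *v (w::real^'n))"
  by (metis dot_lmul_matrix inner_commute transpose_matrix_vector)

lemma sym_inner: assumes "transpose M = M"
  shows "x \<bullet> (M *v y) = y \<bullet> (M *v (x::real^'n))"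
  by (metis assms inner_commute inner_mv_transpose)

lemma sym_min_eigvec:
  fixes M :: "real^'n^'n"
  assumes sym: "transpose M = M"
  shows "\<exists>\<mu> v. v \<noteq> 0 \<and> M *v v = \<mu> *s v \<and> (\<forall>x. \<mu> * (x \<bullet> x) \<le> x \<bullet> (M *v x))"
proof -
  let ?S = "sphere (0::real^'n) 1"
  have cS: "compact ?S" by simp
  have neS: "?S \<noteq> {}"
    by (metis empty_iff mem_sphere_0 norm_axis_1)
  have cont: "continuous_on ?S (\<lambda>x. x \<bullet> (M *v x))"
    by (intro continuous_intros linear_continuous_on matrix_vector_mul_bounded_linear)
  obtain u where uS: "u \<in> ?S" and umin: "\<And>y. y \<in> ?S \<Longrightarrow> u \<bullet> (M *v u) \<le> y \<bullet> (M *v y)"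
    using continuous_attains_inf[OF cS neS cont] by blast
  define \<mu> where "\<mu> = u \<bullet> (M *v u)"
  have nu: "norm u = 1" using uS by simp
  have uu: "u \<bullet> u = 1" using nu by (simp add: norm_eq_1)
  have ge: "\<mu> * (x \<bullet> x) \<le> x \<bullet> (M *v x)" for x
  proof (cases "x = 0")
    case True then show ?thesis by simp
  next
    case False
    let ?y = "(1 / norm x) *\<^sub>R x"
    have "?y \<in> ?S" using False by simp
    then have "\<mu> \<le> ?y \<bullet> (M *v ?y)" using umin \<mu>_def by blast
    also have "?y \<bullet> (M *v ?y) = (x \<bullet> (M *v x)) / (norm x)^2"
      by (simp add: matrix_vector_mult_scaleR power2_eq_square)
    finally have "\<mu> * (norm x)^2 \<le> x \<bullet> (M *v x)"
      using False by (simp add: field_simps)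
    then show ?thesis by (simp add: power2_norm_eq_inner)
  qed
  define R where "R w = M *v w - \<mu> *\<^sub>R w" for w
  have Rlin: "R (a + s *\<^sub>R b) = R a + s *\<^sub>R R b" for a b s
    unfolding R_def by (simp add: matrix_vector_right_distrib matrix_vector_mult_scaleR algebra_simps)
  have Rpos: "w \<bullet> R w \<ge> 0" for w using ge[of w] unfolding R_def by (simp add: inner_diff_right)
  have Ru0: "u \<bullet> R u = 0" unfolding R_def \<mu>_def using uu by (simp add: inner_diff_right)
  have Rsym: "a \<bullet> R b = b \<bullet> R a" for a b
    unfolding R_def using sym_inner[OF sym] by (simp add: inner_diff_right inner_commute)
  define z where "z = R u"
  have key: "0 \<le> 2 * s * (z \<bullet> z) + s^2 * (z \<bullet> R z)" for s
  proof -
    have "0 \<le> (u + s *\<^sub>R z) \<bullet> R (u + s *\<^sub>R z)" by (rule Rpos)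
    also have "\<dots> = u \<bullet> R u + s * (u \<bullet> R z) + s * (z \<bullet> R u) + s^2 * (z \<bullet> R z)"
      by (simp add: Rlin inner_add_left inner_add_right power2_eq_square algebra_simps)
    also have "\<dots> = 2 * s * (z \<bullet> z) + s^2 * (z \<bullet> R z)"
      using Ru0 Rsym[of u z] by (simp add: z_def)
    finally show ?thesis .
  qed
  have "z \<bullet> z = 0"
  proof (rule ccontr)
    assume ne: "z \<bullet> z \<noteq> 0"
    define a where "a = z \<bullet> z"
    define b where "b = z \<bullet> R z"
    have a0: "a > 0" using ne a_def by (simp add: order_less_le)
    define d where "d = \<bar>b\<bar> + 1"
    have d: "d > 0" "b < 2 * d" unfolding d_def by auto
    define s where "s = - a / d"
    have "0 \<le> 2 * s * a + s^2 * b" using key[of s] a_def b_def by simp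
    moreover have "2 * s * a + s^2 * b < 0"
    proof -
      have "2 * s * a + s^2 * b = a^2 * (b - 2 * d) / d^2"
        unfolding s_def using d by (simp add: field_simps power2_eq_square)
      also have "\<dots> < 0"
        using a0 d by (intro divide_neg_pos mult_pos_neg) auto
      finally show ?thesis .
    qed
    ultimately show False by simp
  qed
  then have "R u = 0" by (simp add: z_def)
  then have "M *v u = \<mu> *s u" unfolding R_def by (simp add: scalar_mult_eq_scaleR)
  moreover have "u \<noteq> 0" using nu by auto
  ultimately show ?thesis using ge by blast
qed

lemma sym_eig_finite:
  fixes M :: "real^'n^'n"
  assumes sym: "transpose M = M"
  shows "finite (real_eigenvalues M)"
proof -
  let ?S = "real_eigenvalues M"
  define f where "f \<mu> = (SOME v. v \<noteq> 0 \<and> M *v v = \<mu> *s v)" for \<mu>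
  have f: "f \<mu> \<noteq> 0 \<and> M *v f \<mu> = \<mu> *s f \<mu>" if "\<mu> \<in> ?S" for \<mu>
  proof -
    have "\<exists>v. v \<noteq> 0 \<and> M *v v = \<mu> *s v" using that unfolding real_eigenvalues_def by blast
    then show ?thesis unfolding f_def by (rule someI_ex)
  qed
  have inj: "inj_on f ?S"
  proof (rule inj_onI)
    fix \<mu> \<nu> assume m: "\<mu> \<in> ?S" and n: "\<nu> \<in> ?S" and e: "f \<mu> = f \<nu>"
    have "\<mu> *s f \<mu> = \<nu> *s f \<mu>" using f[OF m] f[OF n] e by metis
    then have "(\<mu> - \<nu>) *\<^sub>R f \<mu> = 0" by (simp add: scalar_mult_eq_scaleR scaleR_left_diff_distrib)
    then show "\<mu> = \<nu>" using f[OF m] by simp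
  qed
  have orth: "pairwise orthogonal (f ` ?S)"
  proof (clarsimp simp: pairwise_def)
    fix \<mu> \<nu> assume m: "\<mu> \<in> ?S" and n: "\<nu> \<in> ?S" and ne: "f \<mu> \<noteq> f \<nu>"
    then have mn: "\<mu> \<noteq> \<nu>" by blast
    have "\<mu> * (f \<nu> \<bullet> f \<mu>) = f \<nu> \<bullet> (M *v f \<mu>)" using f[OF m] by (simp add: scalar_mult_eq_scaleR)
    also have "\<dots> = f \<mu> \<bullet> (M *v f \<nu>)" by (rule sym_inner[OF sym])
    also have "\<dots> = \<nu> * (f \<nu> \<bullet> f \<mu>)" using f[OF n] by (simp add: scalar_mult_eq_scaleR inner_commute[of "f \<mu>"])
    finally have "f \<nu> \<bullet> f \<mu> = 0" using mn by simp
    then show "orthogonal (f \<mu>) (f \<nu>)" by (simp add: orthogonal_def inner_commute)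
  qed
  have "0 \<notin> f ` ?S" using f by (metis (no_types, lifting) imageE)
  then have "independent (f ` ?S)" using orth pairwise_orthogonal_independent by blast
  then have "finite (f ` ?S)" using independent_bound by blast
  then show ?thesis using inj finite_imageD by blast
qed
lemma sym_eig_bounds:
  fixes M :: "real^'n^'n"
  assumes sym: "transpose M = M"
  shows "min_eig M \<in> real_eigenvalues M" "max_eig M \<in> real_eigenvalues M"
    "min_eig M * (x \<bullet> x) \<le> x \<bullet> (M *v x)" "x \<bullet> (M *v x) \<le> max_eig M * (x \<bullet> x)"
proof -
  let ?S = "real_eigenvalues M"
  have fin: "finite ?S" by (rule sym_eig_finite[OF sym])
  obtain \<mu> v where v: "v \<noteq> 0" "M *v v = \<mu> *s v" and ge: "\<And>x. \<mu> * (x \<bullet> x) \<le> x \<bullet> (M *v x)"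
    using sym_min_eigvec[OF sym] by blast
  have muS: "\<mu> \<in> ?S" using v unfolding real_eigenvalues_def by blast
  have "transpose (- M) = - transpose M" by (simp add: transpose_def vec_eq_iff)
  then have symN: "transpose (- M) = - M" using sym by simp
  obtain \<nu> w where w: "w \<noteq> 0" "(- M) *v w = \<nu> *s w" and ge2: "\<And>x. \<nu> * (x \<bullet> x) \<le> x \<bullet> ((- M) *v x)"
    using sym_min_eigvec[OF symN] by blast
  have mv_neg: "(- M) *v y = - (M *v y)" for y
    by (simp add: matrix_vector_mult_def vec_eq_iff sum_negf)
  have "M *v w = - ((- M) *v w)" by (simp add: mv_neg)
  also have "\<dots> = (- \<nu>) *s w" using w(2) by (simp add: scalar_mult_eq_scaleR)
  finally have "M *v w = (- \<nu>) *s w" .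
  then have nuS: "- \<nu> \<in> ?S" using w(1) unfolding real_eigenvalues_def by blast
  have ne: "?S \<noteq> {}" using muS by auto
  show "min_eig M \<in> ?S" unfolding min_eig_def using fin ne by simp
  show "max_eig M \<in> ?S" unfolding max_eig_def using fin ne by simp
  have "min_eig M \<le> \<mu>" unfolding min_eig_def using fin muS by simp
  then show "min_eig M * (x \<bullet> x) \<le> x \<bullet> (M *v x)"
    using ge[of x] by (meson inner_ge_zero mult_right_mono order_trans)
  have "- \<nu> \<le> max_eig M" unfolding max_eig_def using fin nuS by simp
  moreover have "x \<bullet> (M *v x) \<le> - \<nu> * (x \<bullet> x)" using ge2[of x] by (simp add: mv_neg)
  ultimately show "x \<bullet> (M *v x) \<le> max_eig M * (x \<bullet> x)"
    by (meson inner_ge_zero mult_right_mono order_trans)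
qed

lemma pd_eig_pos:
  fixes M :: "real^'n^'n"
  assumes sym: "transpose M = M" and pd: "pos_def M"
  shows "min_eig M > 0"
proof -
  obtain v where v: "v \<noteq> 0" "M *v v = min_eig M *s v"
    using sym_eig_bounds(1)[OF sym] unfolding real_eigenvalues_def by blast
  have "v \<bullet> (M *v v) > 0" using pd v unfolding pos_def_def by blast
  then have "min_eig M * (v \<bullet> v) > 0" using v by (simp add: scalar_mult_eq_scaleR)
  moreover have "v \<bullet> v > 0" using v by simp
  ultimately show ?thesis by (simp add: zero_less_mult_iff)
qed


lemma mnorm_bound:
  fixes N :: "real^'n^'n"
  shows "\<bar>a \<bullet> (N *v b)\<bar> \<le> mnorm N * norm a * norm b" "mnorm N \<ge> 0"
proof -
  have bl: "bounded_linear (\<lambda>x. N *v x)" by simp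
  have "\<bar>a \<bullet> (N *v b)\<bar> \<le> norm a * norm (N *v b)" by (rule Cauchy_Schwarz_ineq2)
  also have "norm (N *v b) \<le> mnorm N * norm b" unfolding mnorm_def using onorm[OF bl] by simp
  then have "norm a * norm (N *v b) \<le> norm a * (mnorm N * norm b)" by (simp add: mult_left_mono)
  finally show "\<bar>a \<bullet> (N *v b)\<bar> \<le> mnorm N * norm a * norm b" by (simp add: ac_simps)
  show "mnorm N \<ge> 0" unfolding mnorm_def using onorm_pos_le[OF bl] .
qed

lemma decay:
  fixes V :: "nat \<Rightarrow> real" and \<alpha> \<beta> :: real
  assumes V0: "\<And>t. V t \<ge> 0" and a0: "\<alpha> \<ge> 0" and b0: "\<beta> \<ge> 0" and ab: "\<alpha> + \<beta> < 1"
    and tauN: "\<And>t. tau t \<le> N"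
    and step: "\<And>t. t \<ge> N \<Longrightarrow> V (Suc t) \<le> \<alpha> * V t + \<beta> * V (t - tau t)"
  shows "\<exists>lam. 0 < lam \<and> lam < 1 \<and> (\<forall>t. V t \<le> Max (V ` {0..N}) / (lam^2)^N * (lam^2)^t)"
proof -
  define r where "r = max (\<alpha> + \<beta>) (1/2)"
  have r: "0 < r" "r < 1" "\<alpha> + \<beta> \<le> r" unfolding r_def using ab by auto
  define lam where "lam = root (2 * (N + 1)) r"
  have lam: "0 < lam" "lam < 1" unfolding lam_def using r by (auto intro: real_root_gt_zero)
  define L where "L = lam^2"
  have L: "0 < L" "L \<le> 1" unfolding L_def using lam by (auto simp: power_le_one)
  have "L^(N+1) = lam^(2*(N+1))" unfolding L_def by (simp only: power_mult)
  also have "\<dots> = r" unfolding lam_def using r by (intro real_root_pow_pos2) auto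
  finally have LN: "L^(N+1) = r" .
  define Vm where "Vm = Max (V ` {0..N})"
  have Vm: "V s \<le> Vm" if "s \<le> N" for s unfolding Vm_def using that by (intro Max_ge) auto
  define K where "K = Vm / L^N"
  have K0: "K \<ge> 0" unfolding K_def using Vm[of 0] V0[of 0] L by simp
  have main: "V t \<le> K * L^t" for t
  proof (induction t rule: less_induct)
    case (less t)
    show ?case
    proof (cases "t \<le> N")
      case True
      have "V t \<le> Vm" using Vm True .
      also have "Vm = K * L^N" unfolding K_def using L by simp
      also have "\<dots> \<le> K * L^t" using K0 L True by (intro mult_left_mono power_decreasing) auto
      finally show ?thesis .
    next
      case False
      then obtain s where ts: "t = Suc s" and sN: "s \<ge> N" by (cases t) auto
      have IH1: "V s \<le> K * L^s" using less ts by simp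
      have IH2: "V (s - tau s) \<le> K * L^(s - tau s)" using less ts by simp
      have p1: "L^s \<le> L^(s-N)" using L by (intro power_decreasing) auto
      have p2: "L^(s - tau s) \<le> L^(s-N)" using L tauN[of s] by (intro power_decreasing) auto
      have "V t \<le> \<alpha> * V s + \<beta> * V (s - tau s)" using step[OF sN] ts by simp
      also have "\<dots> \<le> \<alpha> * (K * L^(s-N)) + \<beta> * (K * L^(s-N))"
      proof (rule add_mono)
        have "K * L^s \<le> K * L^(s-N)" using p1 K0 by (rule mult_left_mono)
        then show "\<alpha> * V s \<le> \<alpha> * (K * L^(s-N))" using IH1 a0 by (meson mult_left_mono order_trans)
        have "K * L^(s - tau s) \<le> K * L^(s-N)" using p2 K0 by (rule mult_left_mono)
        then show "\<beta> * V (s - tau s) \<le> \<beta> * (K * L^(s-N))" using IH2 b0 by (meson mult_left_mono order_trans)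
      qed
      also have "\<dots> = (\<alpha> + \<beta>) * (K * L^(s-N))" by (simp add: algebra_simps)
      also have "\<dots> \<le> L^(N+1) * (K * L^(s-N))"
        using r LN K0 L by (intro mult_right_mono) auto
      also have "\<dots> = K * (L^(N+1) * L^(s-N))" by (simp only: ac_simps)
      also have "L^(N+1) * L^(s-N) = L^t" using sN ts by (simp only: power_add[symmetric]) simp
      finally show ?thesis .
    qed
  qed
  show ?thesis
    using lam main unfolding K_def Vm_def L_def by blast
qed

theorem theorem1:
  fixes A B C H :: "real^'n^'n"
    and T :: "nat set" and tau :: "nat \<Rightarrow> nat" and x :: "nat \<Rightarrow> real^'n"
  assumes stabA: "schur_stable A"
    and symC: "transpose C = C" and pdC: "pos_def C"
    and symH: "transpose H = H" and pdH: "pos_def H"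
    and lyap: "transpose A ** H ** A - H = - C"
    and T_ne: "T \<noteq> {}" and T_fin: "finite T" and T_pos: "\<forall>s\<in>T. s \<ge> 1"
    and tau_T: "\<forall>t. tau t \<in> T"
    and rec: "\<forall>t\<ge>Max T. x (Suc t) = A *v x t + B *v x (t - tau t)"
    and ab: "(let c = min_eig C; eta_lo = min_eig H; eta_hi = max_eig H;
                  nAHB = mnorm (transpose A ** H ** B); nBHB = mnorm (transpose B ** H ** B);
                  \<alpha> = (if c > nAHB then \<bar>eta_hi - c + nAHB\<bar> / eta_hi
                       else \<bar>eta_lo - c + nAHB\<bar> / eta_lo);
                  \<beta> = (nAHB + nBHB) / eta_lo
              in \<alpha> + \<beta> < 1)"
  shows "\<exists>M>0. \<exists>lam. 0 < lam \<and> lam < 1 \<and>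
           (\<forall>t. norm (x t) \<le> M * lam ^ t * Max ((\<lambda>s. norm (x s)) ` {0..Max T}))"
proof -
  define N where "N = Max T"
  define c where "c = min_eig C"
  define el where "el = min_eig H"
  define eh where "eh = max_eig H"
  define N1 where "N1 = transpose A ** H ** B"
  define N2 where "N2 = transpose B ** H ** B"
  define n1 where "n1 = mnorm N1"
  define n2 where "n2 = mnorm N2"
  define \<alpha> where "\<alpha> = (if c > n1 then \<bar>eh - c + n1\<bar> / eh else \<bar>el - c + n1\<bar> / el)"
  define \<beta> where "\<beta> = (n1 + n2) / el"
  have ab1: "\<alpha> + \<beta> < 1" using ab unfolding Let_def \<alpha>_def \<beta>_def c_def el_def eh_def n1_def n2_def N1_def N2_def .
  have el0: "el > 0" using pd_eig_pos[OF symH pdH] el_def by simp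
  have Hlo: "el * (v \<bullet> v) \<le> v \<bullet> (H *v v)" for v using sym_eig_bounds(3)[OF symH] el_def by simp
  have Hhi: "v \<bullet> (H *v v) \<le> eh * (v \<bullet> v)" for v using sym_eig_bounds(4)[OF symH] eh_def by simp
  have Clo: "c * (v \<bullet> v) \<le> v \<bullet> (C *v v)" for v using sym_eig_bounds(3)[OF symC] c_def by simp
  define v0 :: "real^'n" where "v0 = axis undefined 1"
  have "el * (v0 \<bullet> v0) \<le> eh * (v0 \<bullet> v0)"
    by (rule order_trans[OF Hlo Hhi])
  then have eleh: "el \<le> eh" unfolding v0_def by (simp add: inner_axis_axis)
  have eh0: "eh > 0" using el0 eleh by simp
  have n10: "n1 \<ge> 0" and n20: "n2 \<ge> 0" unfolding n1_def n2_def using mnorm_bound(2) by auto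
  have n1b: "\<bar>a \<bullet> (N1 *v b)\<bar> \<le> n1 * norm a * norm b" for a b unfolding n1_def by (rule mnorm_bound(1))
  have n2b: "\<bar>a \<bullet> (N2 *v b)\<bar> \<le> n2 * norm a * norm b" for a b unfolding n2_def by (rule mnorm_bound(1))
  have AHA: "transpose A ** H ** A = H - C" using lyap by (simp add: diff_eq_eq)
  have AHA': "transpose A ** (H ** A) = H - C" using AHA by (simp add: matrix_mul_assoc)
  have quad: "(A *v a + B *v b) \<bullet> (H *v (A *v a + B *v b)) =
      a \<bullet> (H *v a) - a \<bullet> (C *v a) + 2 * (a \<bullet> (N1 *v b)) + b \<bullet> (N2 *v b)" for a b
  proof -
    have e1: "(A *v a) \<bullet> (H *v (A *v a)) = a \<bullet> (H *v a) - a \<bullet> (C *v a)"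
      by (simp add: inner_mv_transpose matrix_vector_mul_assoc AHA' matrix_vector_mult_diff_rdistrib inner_diff_right)
    have e2: "(A *v a) \<bullet> (H *v (B *v b)) = a \<bullet> (N1 *v b)"
      unfolding N1_def by (simp add: inner_mv_transpose matrix_vector_mul_assoc matrix_mul_assoc)
    have e3: "(B *v b) \<bullet> (H *v (A *v a)) = (A *v a) \<bullet> (H *v (B *v b))"
      by (rule sym_inner[OF symH])
    have e4: "(B *v b) \<bullet> (H *v (B *v b)) = b \<bullet> (N2 *v b)"
      unfolding N2_def by (simp add: inner_mv_transpose matrix_vector_mul_assoc matrix_mul_assoc)
    show ?thesis
      by (simp only: matrix_vector_right_distrib inner_add_left inner_add_right e1 e2 e3 e4)
  qed
  define V where "V t = x t \<bullet> (H *v x t)" for t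
  have V0: "V t \<ge> 0" for t
  proof -
    have "0 \<le> el * (x t \<bullet> x t)" using el0 by simp
    then show ?thesis using Hlo[of "x t"] unfolding V_def by linarith
  qed
  have a0: "\<alpha> \<ge> 0" unfolding \<alpha>_def using el0 eh0 by auto
  have b0: "\<beta> \<ge> 0" unfolding \<beta>_def using el0 n10 n20 by auto
  have tauN: "tau t \<le> N" for t unfolding N_def using tau_T T_fin by auto
  have step: "V (Suc t) \<le> \<alpha> * V t + \<beta> * V (t - tau t)" if tN: "t \<ge> N" for t
  proof -
    define a where "a = x t"
    define b where "b = x (t - tau t)"
    have xs: "x (Suc t) = A *v a + B *v b" using rec tN unfolding N_def a_def b_def by blast
    define p where "p = a \<bullet> a"
    define q where "q = b \<bullet> b"
    have pn: "p = (norm a)^2" unfolding p_def by (simp add: power2_norm_eq_inner)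
    have qn: "q = (norm b)^2" unfolding q_def by (simp add: power2_norm_eq_inner)
    have Va: "V t = a \<bullet> (H *v a)" unfolding V_def a_def ..
    have Vb: "V (t - tau t) = b \<bullet> (H *v b)" unfolding V_def b_def ..
    have "V (Suc t) = V t - a \<bullet> (C *v a) + 2 * (a \<bullet> (N1 *v b)) + b \<bullet> (N2 *v b)"
      unfolding V_def xs quad a_def ..
    also have "\<dots> \<le> V t - c * p + 2 * (n1 * norm a * norm b) + n2 * q"
    proof -
      have "a \<bullet> (N1 *v b) \<le> n1 * norm a * norm b" using n1b[of a b] by simp
      moreover have "b \<bullet> (N2 *v b) \<le> n2 * q" using n2b[of b b] qn by (simp add: power2_eq_square ac_simps)
      moreover have "c * p \<le> a \<bullet> (C *v a)" using Clo p_def by simp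
      ultimately show ?thesis by linarith
    qed
    also have "\<dots> \<le> V t - (c - n1) * p + (n1 + n2) * q"
    proof -
      have "2 * (norm a * norm b) \<le> p + q" unfolding pn qn
        using sum_squares_bound[of "norm a" "norm b"] by (simp add: power2_eq_square)
      then have "n1 * (2 * (norm a * norm b)) \<le> n1 * (p + q)" using n10 by (rule mult_left_mono)
      then show ?thesis by (simp add: algebra_simps)
    qed
    also have "(n1 + n2) * q \<le> \<beta> * V (t - tau t)"
    proof -
      have "el * q \<le> V (t - tau t)" using Hlo[of b] Vb q_def by simp
      then have "(n1 + n2) / el * (el * q) \<le> \<beta> * V (t - tau t)"
        unfolding \<beta>_def using b0 \<beta>_def by (intro mult_left_mono) auto
      then show ?thesis using el0 by simp
    qed
    also have "V t - (c - n1) * p \<le> \<alpha> * V t"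
    proof (cases "c > n1")
      case True
      have "V t \<le> eh * p" using Hhi[of a] Va p_def by simp
      then have "(c - n1) * (V t / eh) \<le> (c - n1) * p" using True eh0
        by (intro mult_left_mono) (auto simp: field_simps)
      then have "V t - (c - n1) * p \<le> V t - (c - n1) * (V t / eh)" by simp
      also have "\<dots> = (eh - c + n1) / eh * V t" using eh0 by (simp add: field_simps)
      also have "\<dots> \<le> \<bar>eh - c + n1\<bar> / eh * V t" using eh0 V0[of t]
        by (intro mult_right_mono divide_right_mono) auto
      also have "\<dots> = \<alpha> * V t" unfolding \<alpha>_def using True by simp
      finally show ?thesis .
    next
      case False
      have "el * p \<le> V t" using Hlo[of a] Va p_def by simp
      then have "(n1 - c) * p \<le> (n1 - c) * (V t / el)" using False el0
        by (intro mult_left_mono) (auto simp: field_simps)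
      then have "V t - (c - n1) * p \<le> V t + (n1 - c) * (V t / el)" by (simp add: algebra_simps)
      also have "\<dots> = (el - c + n1) / el * V t" using el0 by (simp add: field_simps)
      also have "\<dots> \<le> \<bar>el - c + n1\<bar> / el * V t" using el0 V0[of t]
        by (intro mult_right_mono divide_right_mono) auto
      also have "\<dots> = \<alpha> * V t" unfolding \<alpha>_def using False by simp
      finally show ?thesis .
    qed
    finally show ?thesis by simp
  qed
  obtain lam where lam: "0 < lam" "lam < 1"
    and dec: "\<And>t. V t \<le> Max (V ` {0..N}) / (lam^2)^N * (lam^2)^t"
    using decay[of V \<alpha> \<beta> tau N, OF V0 a0 b0 ab1 tauN step] by blast
  define m where "m = Max ((\<lambda>s. norm (x s)) ` {0..N})"
  have mge: "norm (x s) \<le> m" if "s \<le> N" for s unfolding m_def using that by (intro Max_ge) auto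
  have m0: "m \<ge> 0" by (rule order_trans[OF norm_ge_zero mge[of 0]]) simp
  have Vmax: "Max (V ` {0..N}) \<le> eh * m^2"
  proof -
    have "Max (V ` {0..N}) \<in> V ` {0..N}" by (intro Max_in) auto
    then obtain s where s: "s \<le> N" "Max (V ` {0..N}) = V s" by (metis atLeastAtMost_iff imageE)
    have "V s \<le> eh * (norm (x s))^2" using Hhi[of "x s"] unfolding V_def by (simp add: power2_norm_eq_inner)
    also have "\<dots> \<le> eh * m^2" using eh0 mge[OF s(1)] by (intro mult_left_mono power_mono) auto
    finally show ?thesis using s by simp
  qed
  define L where "L = lam^2"
  have L0: "L > 0" unfolding L_def using lam by simp
  define Mc where "Mc = sqrt (eh / (el * L^N))"
  have Mc0: "Mc > 0" unfolding Mc_def using eh0 el0 L0 by simp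
  have bound: "norm (x t) \<le> Mc * lam ^ t * m" for t
  proof (rule power2_le_imp_le)
    show "0 \<le> Mc * lam ^ t * m" using Mc0 lam m0 by simp
    have "el * (norm (x t))^2 \<le> V t" using Hlo[of "x t"] unfolding V_def by (simp add: power2_norm_eq_inner)
    also have "\<dots> \<le> Max (V ` {0..N}) / L^N * L^t" using dec unfolding L_def .
    also have "\<dots> \<le> eh * m^2 / L^N * L^t" using Vmax L0
      by (intro mult_right_mono divide_right_mono) auto
    finally have "(norm (x t))^2 \<le> eh * m^2 / L^N * L^t / el" using el0 L0 by (simp add: field_simps)
    also have "\<dots> = (eh / (el * L^N)) * L^t * m^2" using el0 L0 by (simp add: field_simps)
    also have "\<dots> = (Mc * lam ^ t * m)^2"
    proof -
      have "Mc^2 = eh / (el * L^N)" unfolding Mc_def using eh0 el0 L0 by simp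
      moreover have "(lam^t)^2 = L^t" unfolding L_def by (simp only: power_mult[symmetric] mult.commute)
      ultimately show ?thesis by (simp add: power_mult_distrib)
    qed
    finally show "(norm (x t))^2 \<le> (Mc * lam ^ t * m)^2" .
  qed
  show ?thesis
    using Mc0 lam bound unfolding m_def N_def by blast
qed

end
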